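(* Let $T$ be an AVL tree with $n$ nodes, let $a$ be its number of depth-0 nodes (leaves), $b$ its number of depth-1 nodes and $b_2$ its number of balanced depth-1 nodes, and set $\alpha=a/n$ and $\beta_2=b_2/b$. If $\alpha\le 0.4$, then \[\beta_2\le\frac{3\alpha-1}{1-\alpha}.\]
   Context: An AVL tree is a binary tree (each node has an optional left and an optional right child) such that at every node the heights of the left and right subtrees differ by at most $1$, where the height of a tree is the number of edges on a longest root-to-leaf path and the empty tree has height $-1$. The depth of a node is the height of the subtree rooted at that node. A node is balanced if its left and right subtrees have equal height, and unbalanced otherwise; thus a balanced depth-1 node has two leaf children and an unbalanced depth-1 node has exactly one (leaf) child. *)

theory Defs
  imports Complex_Main "HOL-Library.Tree"
begin

text \<open>The library height is shifted by one w.r.t. the paper: library height Leaf = 0,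
  so the paper's height (depth) of a nonempty subtree t is height t - 1.
  Thus depth-0 nodes have library height 1, depth-1 nodes library height 2.\<close>

fun avl :: "'a tree \<Rightarrow> bool" where
  "avl Leaf = True"
| "avl (Node l x r) =
     (\<bar>int (height l) - int (height r)\<bar> \<le> 1 \<and> avl l \<and> avl r)"

fun num_depth0 :: "'a tree \<Rightarrow> nat" where
  "num_depth0 Leaf = 0"
| "num_depth0 (Node l x r) =
     (if height (Node l x r) = 1 then 1 else 0) + num_depth0 l + num_depth0 r"

fun num_depth1 :: "'a tree \<Rightarrow> nat" where
  "num_depth1 Leaf = 0"
| "num_depth1 (Node l x r) =
     (if height (Node l x r) = 2 then 1 else 0) + num_depth1 l + num_depth1 r"

fun num_bal_depth1 :: "'a tree \<Rightarrow> nat" where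
  "num_bal_depth1 Leaf = 0"
| "num_bal_depth1 (Node l x r) =
     (if height (Node l x r) = 2 \<and> height l = height r then 1 else 0)
     + num_bal_depth1 l + num_bal_depth1 r"

end

theory Submission
  imports Defs
begin

lemma L1: "avl t \<Longrightarrow> size t + 1 + num_bal_depth1 t
   = 2 * num_depth0 t + num_depth1 t + (if t = Leaf then 1 else 0)"
proof (induction t)
  case Leaf thus ?case by simp
next
  case (Node l x r)
  show ?case
  proof (cases "height (Node l x r) \<le> 2")
    case True
    then show ?thesis using Node
      by (cases l; cases r) (auto split: if_splits simp: max_def)
  next
    case False
    then have "l \<noteq> Leaf" "r \<noteq> Leaf" using Node.prems
      by (auto simp: max_def split: if_splits)
    then show ?thesis using Node False by auto
  qed
qed

lemma L2: "num_depth1 t + num_bal_depth1 t \<le> num_depth0 t"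
proof (induction t)
  case Leaf thus ?case by simp
next
  case (Node l x r)
  show ?case
  proof (cases "height (Node l x r) = 2")
    case True
    then show ?thesis using Node
      by (cases l; cases r) (auto split: if_splits simp: max_def)
  next
    case False
    then show ?thesis using Node by auto
  qed
qed

lemma L4: "num_bal_depth1 t \<le> num_depth1 t"
  by (induction t) auto

lemma L3: "height t \<ge> 2 \<Longrightarrow> num_depth1 t \<ge> 1"
proof (induction t)
  case Leaf thus ?case by simp
next
  case (Node l x r)
  then show ?case by (cases "height (Node l x r) = 2") (auto simp: max_def split: if_splits)
qed

theorem lemma2:
  fixes T :: "'a tree"
  assumes "avl T"
    and "T \<noteq> Leaf"
    and "real (num_depth0 T) / real (size T) \<le> 2 / 5"
  shows "real (num_bal_depth1 T) / real (num_depth1 T)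
           \<le> (3 * (real (num_depth0 T) / real (size T)) - 1)
              / (1 - real (num_depth0 T) / real (size T))"
proof -
  define a where "a = num_depth0 T"
  define b where "b = num_depth1 T"
  define c where "c = num_bal_depth1 T"
  define n where "n = size T"
  have e: "n + 1 + c = 2 * a + b" using L1[OF assms(1)] assms(2) by (simp add: a_def b_def c_def n_def)
  have i: "b + c \<le> a" using L2 by (simp add: a_def b_def c_def)
  have cb: "c \<le> b" using L4 by (simp add: b_def c_def)
  have np: "n > 0" using assms(2) by (cases T) (auto simp: n_def)
  have h2: "height T \<ge> 2"
  proof (rule ccontr)
    assume "\<not> height T \<ge> 2"
    have z: "height t = 0 \<Longrightarrow> t = Leaf" for t :: "'a tree" by (cases t) auto
    obtain l x r where T: "T = Node l x r" using assms(2) by (cases T) auto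
    then have "l = Leaf \<and> r = Leaf" using \<open>\<not> height T \<ge> 2\<close> by (cases l; cases r) auto
    then have "l = Leaf" "r = Leaf" by blast+
    with T have T: "T = Node Leaf x Leaf" by simp
    then show False using assms(3) by simp
  qed
  have b1: "b \<ge> 1" using L3[OF h2] by (simp add: b_def)
  have na: "n > a" using e i b1 by linarith
  have key: "real c * (real n - real a) \<le> real b * (3 * real a - real n)"
  proof -
    have "0 \<le> (real b - real c) * (real a - real b - real c)"
      using i cb by (intro mult_nonneg_nonneg) auto
    moreover have ne: "real n = 2 * real a + real b - real c - 1" using e proof -
      have "real (n + 1 + c) = real (2 * a + b)" using e by simp
      then show ?thesis by simp
    qed
    ultimately show ?thesis unfolding ne using b1 i by (simp add: algebra_simps)
  qed
  have "(3 * (real a / real n) - 1) / (1 - real a / real n) = (3 * real a - real n) / (real n - real a)"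
  proof -
    have d: "real n - real a \<noteq> 0" "real n \<noteq> 0" using na np by auto
    have "(3 * (real a / real n) - 1) = (3 * real a - real n) / real n" using d by (simp add: field_simps)
    moreover have "(1 - real a / real n) = (real n - real a) / real n" using d by (simp add: field_simps)
    ultimately show ?thesis using d by simp
  qed
  moreover have "real c / real b \<le> (3 * real a - real n) / (real n - real a)"
    using key b1 na by (simp add: divide_simps algebra_simps)
  ultimately show ?thesis by (simp add: a_def b_def c_def n_def)
qed

end
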